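(* Let $\mathcal A\in\mathbb R^{n_1}\otimes\cdots\otimes\mathbb R^{n_k}$, $1\le s\le k$, $r\le\min\{n_1,\dots,n_s\}$, and consider the problem $\mathrm{mLRPOTA}(r)$. At every feasible point of this problem, the linear independence constraint qualification holds, i.e. the gradients of the constraint functions are linearly independent. In particular, at any local maximizer $U$ the KKT conditions hold and the set of Lagrange multipliers associated with $U$ is a singleton.
   Context: Problem $\mathrm{mLRPOTA}(r)$: maximize $\sum_{j=1}^r\big(((U^{(1)})^{\mathsf T},\dots,(U^{(k)})^{\mathsf T})\cdot\mathcal A\big)_{j\cdots j}^2=\sum_{j=1}^r\langle\mathcal A,\mathbf u^{(1)}_j\otimes\cdots\otimes\mathbf u^{(k)}_j\rangle^2$ over $U=(U^{(1)},\dots,U^{(k)})$, $U^{(i)}\in\mathbb R^{n_i\times r}$ with columns $\mathbf u^{(i)}_j$, subject to the equality constraints $(U^{(i)})^{\mathsf T}U^{(i)}=I_r$ for $i=1,\dots,s$ (the entries $(a,b)$, $a\le b$, of the symmetric matrix $(U^{(i)})^{\mathsf T}U^{(i)}-I_r$ being the constraint functions) and $((U^{(i)})^{\mathsf T}U^{(i)})_{jj}=1$ for $j=1,\dots,r$, $i=s+1,\dots,k$. *)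

theory Defs
  imports "HOL-Analysis.Analysis" "HOL-Library.FuncSet"
begin

text \<open>A point U = (U^(1),...,U^(k)) is encoded as a function U i a j = entry (a,j) of the
  n_i x r matrix U^(i), with 0-based indices i < k, a < n i, j < r.
  Entries outside this index range are irrelevant.\<close>

type_synonym point = "nat \<Rightarrow> nat \<Rightarrow> nat \<Rightarrow> real"

definition coords :: "nat \<Rightarrow> (nat \<Rightarrow> nat) \<Rightarrow> nat \<Rightarrow> (nat \<times> nat \<times> nat) set" where
  "coords k n r = {(i, a, j). i < k \<and> a < n i \<and> j < r}"

text \<open>Objective: sum_j <A, u^(1)_j (x) ... (x) u^(k)_j>^2; the tensor A is given by its entries
  A idx for multi-indices idx with idx i < n i (i < k).\<close>
definition objective :: "nat \<Rightarrow> (nat \<Rightarrow> nat) \<Rightarrow> nat \<Rightarrow> ((nat \<Rightarrow> nat) \<Rightarrow> real) \<Rightarrow> point \<Rightarrow> real" where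
  "objective k n r A U =
     (\<Sum>j<r. (\<Sum>idx\<in>(\<Pi>\<^sub>E i\<in>{..<k}. {..<n i}). A idx * (\<Prod>i<k. U i (idx i) j))^2)"

text \<open>Constraint index set: (i,a,b) with a \<le> b < r; for i < s all such pairs (entries of the
  symmetric matrix (U^(i))^T U^(i) - I_r), for s \<le> i < k only the diagonal a = b.\<close>
definition constraints :: "nat \<Rightarrow> nat \<Rightarrow> nat \<Rightarrow> (nat \<times> nat \<times> nat) set" where
  "constraints k s r = {(i, a, b). i < k \<and> a \<le> b \<and> b < r \<and> (i < s \<or> a = b)}"

definition constraint_fun :: "(nat \<Rightarrow> nat) \<Rightarrow> nat \<times> nat \<times> nat \<Rightarrow> point \<Rightarrow> real" where
  "constraint_fun n c U = (case c of (i, a, b) \<Rightarrow>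
     (\<Sum>p<n i. U i p a * U i p b) - (if a = b then 1 else 0))"

definition feasible :: "nat \<Rightarrow> nat \<Rightarrow> (nat \<Rightarrow> nat) \<Rightarrow> nat \<Rightarrow> point \<Rightarrow> bool" where
  "feasible k s n r U \<longleftrightarrow> (\<forall>c\<in>constraints k s r. constraint_fun n c U = 0)"

definition entry :: "point \<Rightarrow> nat \<times> nat \<times> nat \<Rightarrow> real" where
  "entry U x = (case x of (i, a, j) \<Rightarrow> U i a j)"

definition perturb :: "point \<Rightarrow> nat \<times> nat \<times> nat \<Rightarrow> real \<Rightarrow> point" where
  "perturb U x t = (\<lambda>i a j. if (i, a, j) = x then U i a j + t else U i a j)"

definition partial :: "(point \<Rightarrow> real) \<Rightarrow> point \<Rightarrow> nat \<times> nat \<times> nat \<Rightarrow> real" where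
  "partial g U x = deriv (\<lambda>t. g (perturb U x t)) 0"

definition LICQ :: "nat \<Rightarrow> nat \<Rightarrow> (nat \<Rightarrow> nat) \<Rightarrow> nat \<Rightarrow> point \<Rightarrow> bool" where
  "LICQ k s n r U \<longleftrightarrow>
     (\<forall>\<mu>. (\<forall>x\<in>coords k n r.
              (\<Sum>c\<in>constraints k s r. \<mu> c * partial (constraint_fun n c) U x) = 0)
          \<longrightarrow> (\<forall>c\<in>constraints k s r. \<mu> c = 0))"

definition local_maximizer ::
  "nat \<Rightarrow> nat \<Rightarrow> (nat \<Rightarrow> nat) \<Rightarrow> nat \<Rightarrow> ((nat \<Rightarrow> nat) \<Rightarrow> real) \<Rightarrow> point \<Rightarrow> bool" where
  "local_maximizer k s n r A U \<longleftrightarrow> feasible k s n r U \<and>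
     (\<exists>\<epsilon>>0. \<forall>V. feasible k s n r V \<and> (\<Sum>x\<in>coords k n r. (entry V x - entry U x)^2) < \<epsilon>^2
        \<longrightarrow> objective k n r A V \<le> objective k n r A U)"

text \<open>The KKT conditions hold at U iff this set is nonempty (and U is feasible).\<close>
definition lagrange_multipliers ::
  "nat \<Rightarrow> nat \<Rightarrow> (nat \<Rightarrow> nat) \<Rightarrow> nat \<Rightarrow> ((nat \<Rightarrow> nat) \<Rightarrow> real) \<Rightarrow> point
     \<Rightarrow> (nat \<times> nat \<times> nat \<Rightarrow> real) set" where
  "lagrange_multipliers k s n r A U =
     {l. l \<in> constraints k s r \<rightarrow>\<^sub>E UNIV \<and>
        (\<forall>x\<in>coords k n r. partial (objective k n r A) U x =
           (\<Sum>c\<in>constraints k s r. l c * partial (constraint_fun n c) U x))}"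

end

theory Submission
  imports Defs
begin

lemma perturb_eq: "perturb U x t i a j = U i a j + (if (i,a,j) = x then t else 0)"
  by (simp add: perturb_def)

lemma deriv_lin: "((\<lambda>t::real. c + (if P then t else 0)) has_real_derivative (if P then 1 else 0)) (at x)"
  by (cases P) (auto intro!: derivative_eq_intros)

lemma partial_constraint:
  assumes "p < n i'"
  shows "partial (constraint_fun n (i,a,b)) U (i',p,j) =
    (if i' = i then (if j = a then U i p b else 0) + (if j = b then U i p a else 0) else 0)"
proof -
  have "((\<lambda>t. constraint_fun n (i,a,b) (perturb U (i',p,j) t)) has_real_derivative
     (\<Sum>q<n i. (if (i,q,a) = (i',p,j) then 1 else 0) * (U i q b + (if (i,q,b) = (i',p,j) then 0 else 0))
        + (if (i,q,b) = (i',p,j) then 1 else 0) * (U i q a + (if (i,q,a) = (i',p,j) then 0 else 0))) - 0) (at 0)"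
    unfolding constraint_fun_def perturb_eq prod.case
    by (intro DERIV_diff DERIV_const DERIV_sum DERIV_mult deriv_lin)
  then have "partial (constraint_fun n (i,a,b)) U (i',p,j) = 
     (\<Sum>q<n i. (if (i,q,a) = (i',p,j) then 1 else 0) * U i q b
        + (if (i,q,b) = (i',p,j) then 1 else 0) * U i q a)"
    unfolding partial_def by (simp add: DERIV_imp_deriv)
  also have "\<dots> = (if i' = i then (if j = a then U i p b else 0) + (if j = b then U i p a else 0) else 0)"
  proof -
    have "\<And>q. (if (i,q,a) = (i',p,j) then 1 else 0) * U i q b
        + (if (i,q,b) = (i',p,j) then 1 else 0) * U i q a = (if q = p then 
         (if i = i' \<and> a = j then U i p b else 0) + (if i = i' \<and> b = j then U i p a else 0) else 0)"
      by auto
    then show ?thesis using assms by (simp add: sum.delta, blast)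
  qed
  finally show ?thesis .
qed


definition Cb :: "nat \<Rightarrow> (nat \<Rightarrow> nat) \<Rightarrow> ((nat \<Rightarrow> nat) \<Rightarrow> real) \<Rightarrow> point \<Rightarrow> nat \<Rightarrow> nat \<Rightarrow> nat \<Rightarrow> real" where
  "Cb k n A U i0 j p = (\<Sum>idx\<in>(\<Pi>\<^sub>E i\<in>{..<k}. {..<n i}).
      if idx i0 = p then A idx * (\<Prod>i\<in>{..<k}-{i0}. U i (idx i) j) else 0)"

lemma block_inner:
  assumes "i0 < k" and agree: "\<And>i a. i < k \<Longrightarrow> i \<noteq> i0 \<Longrightarrow> a < n i \<Longrightarrow> V i a j = U i a j"
  shows "(\<Sum>idx\<in>(\<Pi>\<^sub>E i\<in>{..<k}. {..<n i}). A idx * (\<Prod>i<k. V i (idx i) j))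
     = (\<Sum>p<n i0. V i0 p j * Cb k n A U i0 j p)"
proof -
  let ?S = "\<Pi>\<^sub>E i\<in>{..<k}. {..<n i}"
  have fin: "finite ?S" by (simp add: finite_PiE)
  have "(\<Sum>p<n i0. V i0 p j * Cb k n A U i0 j p) =
     (\<Sum>p<n i0. \<Sum>idx\<in>?S. if idx i0 = p then V i0 (idx i0) j * A idx * (\<Prod>i\<in>{..<k}-{i0}. U i (idx i) j) else 0)"
    unfolding Cb_def sum_distrib_left by (intro sum.cong refl) (auto simp: mult.assoc)
  also have "\<dots> = (\<Sum>idx\<in>?S. \<Sum>p<n i0. if idx i0 = p then V i0 (idx i0) j * A idx * (\<Prod>i\<in>{..<k}-{i0}. U i (idx i) j) else 0)"
    by (rule sum.swap)
  also have "\<dots> = (\<Sum>idx\<in>?S. V i0 (idx i0) j * A idx * (\<Prod>i\<in>{..<k}-{i0}. U i (idx i) j))"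
  proof (intro sum.cong refl)
    fix idx assume "idx \<in> ?S"
    then have "idx i0 < n i0" using assms(1) by (auto simp: PiE_def Pi_def)
    then show "(\<Sum>p<n i0. if idx i0 = p then V i0 (idx i0) j * A idx * (\<Prod>i\<in>{..<k}-{i0}. U i (idx i) j) else 0)
       = V i0 (idx i0) j * A idx * (\<Prod>i\<in>{..<k}-{i0}. U i (idx i) j)"
      by (simp add: sum.delta)
  qed
  also have "\<dots> = (\<Sum>idx\<in>?S. A idx * (\<Prod>i<k. V i (idx i) j))"
  proof (intro sum.cong refl)
    fix idx assume idx: "idx \<in> ?S"
    have "(\<Prod>i<k. V i (idx i) j) = V i0 (idx i0) j * (\<Prod>i\<in>{..<k}-{i0}. V i (idx i) j)"
      using assms(1) by (subst prod.remove[of _ i0]) auto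
    also have "(\<Prod>i\<in>{..<k}-{i0}. V i (idx i) j) = (\<Prod>i\<in>{..<k}-{i0}. U i (idx i) j)"
      using idx by (intro prod.cong refl agree) (auto simp: PiE_def Pi_def)
    finally show "V i0 (idx i0) j * A idx * (\<Prod>i\<in>{..<k}-{i0}. U i (idx i) j) = A idx * (\<Prod>i<k. V i (idx i) j)"
      by simp
  qed
  finally show ?thesis by simp
qed

lemma objective_block:
  assumes "i0 < k" and agree: "\<And>i a j. i < k \<Longrightarrow> i \<noteq> i0 \<Longrightarrow> a < n i \<Longrightarrow> j < r \<Longrightarrow> V i a j = U i a j"
  shows "objective k n r A V = (\<Sum>j<r. (\<Sum>p<n i0. V i0 p j * Cb k n A U i0 j p)^2)"
  unfolding objective_def using assms by (intro sum.cong refl arg_cong[where f="\<lambda>x. x^2"] block_inner) auto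

lemma quad_deriv:
  assumes "\<And>p j. p < N \<Longrightarrow> j < r \<Longrightarrow> ((\<lambda>t. x t p j) has_real_derivative d p j) (at 0)"
  shows "((\<lambda>t. \<Sum>j<r. (\<Sum>p<N. x t p j * c j p)^2) has_real_derivative
     (\<Sum>j<r. \<Sum>p<N. 2 * (\<Sum>q<N. x 0 q j * c j q) * c j p * d p j)) (at 0)"
proof -
  have "((\<lambda>t. \<Sum>j<r. (\<Sum>p<N. x t p j * c j p)^2) has_real_derivative
     (\<Sum>j<r. of_nat 2 * ((\<Sum>p<N. d p j * c j p) * (\<Sum>p<N. x 0 p j * c j p) ^ (2 - Suc 0)))) (at 0)"
    using assms by (intro DERIV_sum DERIV_power DERIV_cmult_right) auto
  moreover have "(\<Sum>j<r. of_nat 2 * ((\<Sum>p<N. d p j * c j p) * (\<Sum>p<N. x 0 p j * c j p) ^ (2 - Suc 0)))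
     = (\<Sum>j<r. \<Sum>p<N. 2 * (\<Sum>q<N. x 0 q j * c j q) * c j p * d p j)"
    by (intro sum.cong refl) (simp add: sum_distrib_left sum_distrib_right mult_ac, subst sum.swap, simp add: mult_ac)
  ultimately show ?thesis by simp
qed


lemma partial_obj:
  assumes "i0 < k" "p0 < n i0" "j0 < r"
  shows "partial (objective k n r A) U (i0,p0,j0) =
     2 * (\<Sum>q<n i0. U i0 q j0 * Cb k n A U i0 j0 q) * Cb k n A U i0 j0 p0"
proof -
  have eq: "(\<lambda>t. objective k n r A (perturb U (i0,p0,j0) t)) =
     (\<lambda>t. \<Sum>j<r. (\<Sum>p<n i0. perturb U (i0,p0,j0) t i0 p j * Cb k n A U i0 j p)^2)"
    by (rule ext, rule objective_block[OF assms(1)]) (auto simp: perturb_eq)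
  have "((\<lambda>t. \<Sum>j<r. (\<Sum>p<n i0. perturb U (i0,p0,j0) t i0 p j * Cb k n A U i0 j p)^2) has_real_derivative
     (\<Sum>j<r. \<Sum>p<n i0. 2 * (\<Sum>q<n i0. perturb U (i0,p0,j0) 0 i0 q j * Cb k n A U i0 j q) * Cb k n A U i0 j p
        * (if (i0,p,j) = (i0,p0,j0) then 1 else 0))) (at 0)"
    unfolding perturb_eq by (rule quad_deriv) (rule deriv_lin)
  then have "partial (objective k n r A) U (i0,p0,j0) =
     (\<Sum>j<r. \<Sum>p<n i0. 2 * (\<Sum>q<n i0. perturb U (i0,p0,j0) 0 i0 q j * Cb k n A U i0 j q) * Cb k n A U i0 j p
        * (if (i0,p,j) = (i0,p0,j0) then 1 else 0))"
    unfolding partial_def eq by (rule DERIV_imp_deriv)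
  also have "\<dots> = (\<Sum>j<r. if j = j0 then 2 * (\<Sum>q<n i0. U i0 q j * Cb k n A U i0 j q) * Cb k n A U i0 j p0 else 0)"
    using assms by (intro sum.cong refl) (auto simp: perturb_eq if_distrib if_distribR sum.delta cong: if_cong)
  also have "\<dots> = 2 * (\<Sum>q<n i0. U i0 q j0 * Cb k n A U i0 j0 q) * Cb k n A U i0 j0 p0"
    using assms by (simp add: sum.delta)
  finally show ?thesis .
qed

lemma curve_deriv:
  assumes "i0 < k"
    and agree: "\<And>t i a j. i < k \<Longrightarrow> i \<noteq> i0 \<Longrightarrow> a < n i \<Longrightarrow> j < r \<Longrightarrow> \<gamma> t i a j = U i a j"
    and init: "\<And>p j. p < n i0 \<Longrightarrow> j < r \<Longrightarrow> \<gamma> 0 i0 p j = U i0 p j"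
    and der: "\<And>p j. p < n i0 \<Longrightarrow> j < r \<Longrightarrow> ((\<lambda>t. \<gamma> t i0 p j) has_real_derivative d p j) (at 0)"
  shows "((\<lambda>t. objective k n r A (\<gamma> t)) has_real_derivative
     (\<Sum>j<r. \<Sum>p<n i0. partial (objective k n r A) U (i0,p,j) * d p j)) (at 0)"
proof -
  have eq: "(\<lambda>t. objective k n r A (\<gamma> t)) =
     (\<lambda>t. \<Sum>j<r. (\<Sum>p<n i0. \<gamma> t i0 p j * Cb k n A U i0 j p)^2)"
    by (rule ext, rule objective_block[OF assms(1)]) (auto simp: agree)
  have "((\<lambda>t. \<Sum>j<r. (\<Sum>p<n i0. \<gamma> t i0 p j * Cb k n A U i0 j p)^2) has_real_derivative
     (\<Sum>j<r. \<Sum>p<n i0. 2 * (\<Sum>q<n i0. \<gamma> 0 i0 q j * Cb k n A U i0 j q) * Cb k n A U i0 j p * d p j)) (at 0)"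
    by (rule quad_deriv) (rule der)
  moreover have "(\<Sum>j<r. \<Sum>p<n i0. 2 * (\<Sum>q<n i0. \<gamma> 0 i0 q j * Cb k n A U i0 j q) * Cb k n A U i0 j p * d p j)
     = (\<Sum>j<r. \<Sum>p<n i0. partial (objective k n r A) U (i0,p,j) * d p j)"
    using assms(1) by (intro sum.cong refl) (simp add: partial_obj init)
  ultimately show ?thesis unfolding eq by simp
qed


lemma finite_coords: "finite (coords k n r)"
proof -
  have "coords k n r \<subseteq> (SIGMA i:{..<k}. {..<n i} \<times> {..<r})"
    by (auto simp: coords_def)
  then show ?thesis by (rule finite_subset) auto
qed

lemma lm_deriv0:
  assumes lm: "local_maximizer k s n r A U" and "i0 < k"
    and feas: "\<And>t. feasible k s n r (\<gamma> t)"
    and agree: "\<And>t i a j. i < k \<Longrightarrow> i \<noteq> i0 \<Longrightarrow> a < n i \<Longrightarrow> j < r \<Longrightarrow> \<gamma> t i a j = U i a j"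
    and init: "\<And>p j. p < n i0 \<Longrightarrow> j < r \<Longrightarrow> \<gamma> 0 i0 p j = U i0 p j"
    and der: "\<And>p j. p < n i0 \<Longrightarrow> j < r \<Longrightarrow> ((\<lambda>t. \<gamma> t i0 p j) has_real_derivative d p j) (at 0)"
  shows "(\<Sum>j<r. \<Sum>p<n i0. partial (objective k n r A) U (i0,p,j) * d p j) = 0"
proof -
  obtain \<epsilon> where "\<epsilon> > 0" and H: "\<And>V. feasible k s n r V \<Longrightarrow>
      (\<Sum>x\<in>coords k n r. (entry V x - entry U x)^2) < \<epsilon>^2 \<Longrightarrow> objective k n r A V \<le> objective k n r A U"
    using lm unfolding local_maximizer_def by blast
  define h where "h t = (\<Sum>x\<in>coords k n r. (entry (\<gamma> t) x - entry U x)^2)" for t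
  have cont: "isCont (\<lambda>t. entry (\<gamma> t) x) 0" if xin: "x \<in> coords k n r" for x
  proof -
    obtain i a j where x: "x = (i,a,j)" and "i < k" "a < n i" "j < r"
      using xin unfolding coords_def by blast
    show ?thesis
    proof (cases "i = i0")
      case True
      then show ?thesis using der[of a j] \<open>a < n i\<close> \<open>j < r\<close> x
        by (auto simp: entry_def intro: DERIV_isCont)
    next
      case False
      then have "(\<lambda>t. entry (\<gamma> t) x) = (\<lambda>t. U i a j)"
        using agree \<open>i < k\<close> \<open>a < n i\<close> \<open>j < r\<close> x by (auto simp: entry_def)
      then show ?thesis by simp
    qed
  qed
  have "isCont h 0"
    unfolding h_def by (intro continuous_intros cont)
  moreover have "h 0 = 0"
    unfolding h_def
  proof (intro sum.neutral ballI)
    fix x assume "x \<in> coords k n r"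
    then obtain i a j where x: "x = (i,a,j)" and "i < k" "a < n i" "j < r"
      by (auto simp: coords_def)
    then show "(entry (\<gamma> 0) x - entry U x)^2 = 0"
      using agree init by (cases "i = i0") (auto simp: entry_def)
  qed
  ultimately have "h \<midarrow>0\<rightarrow> 0" by (simp add: isCont_def)
  then obtain \<delta> where "\<delta> > 0" and \<delta>: "\<And>t. t \<noteq> 0 \<Longrightarrow> norm (t - 0) < \<delta> \<Longrightarrow> norm (h t - 0) < \<epsilon>^2"
    unfolding LIM_eq using \<open>\<epsilon> > 0\<close> by (meson zero_less_power)
  have obj0: "objective k n r A (\<gamma> 0) = objective k n r A U"
    using objective_block[OF \<open>i0 < k\<close>, where V=U and U=U and r=r and A=A] objective_block[OF \<open>i0 < k\<close>, where V="\<gamma> 0" and U=U and r=r and A=A] agree init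
    by simp
  have le: "\<forall>t. \<bar>0 - t\<bar> < \<delta> \<longrightarrow> objective k n r A (\<gamma> t) \<le> objective k n r A (\<gamma> 0)"
  proof (intro allI impI)
    fix t :: real assume t: "\<bar>0 - t\<bar> < \<delta>"
    show "objective k n r A (\<gamma> t) \<le> objective k n r A (\<gamma> 0)"
    proof (cases "t = 0")
      case True then show ?thesis by simp
    next
      case False
      then have "h t < \<epsilon>^2" using \<delta>[of t] t by simp
      then show ?thesis unfolding obj0 h_def by (intro H feas)
    qed
  qed
  have D: "((\<lambda>t. objective k n r A (\<gamma> t)) has_real_derivative
     (\<Sum>j<r. \<Sum>p<n i0. partial (objective k n r A) U (i0,p,j) * d p j)) (at 0)"
  proof (rule curve_deriv[OF \<open>i0 < k\<close>])
    show "\<gamma> t i a j = U i a j" if "i < k" "i \<noteq> i0" "a < n i" "j < r" for t i a j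
      using agree that by blast
    show "\<gamma> 0 i0 p j = U i0 p j" if "p < n i0" "j < r" for p j
      using init that by blast
    show "((\<lambda>t. \<gamma> t i0 p j) has_real_derivative d p j) (at 0)" if "p < n i0" "j < r" for p j
      using der that by blast
  qed
  show ?thesis
    by (rule DERIV_local_max[OF D \<open>\<delta> > 0\<close> le])
qed


lemma feas_ip:
  assumes "feasible k s n r U" "i < k" "a < r" "b < r" "i < s \<or> a = b"
  shows "(\<Sum>p<n i. U i p a * U i p b) = (if a = b then 1 else 0)"
proof (cases "a \<le> b")
  case True
  then have "(i,a,b) \<in> constraints k s r" using assms by (auto simp: constraints_def)
  then show ?thesis using assms(1) unfolding feasible_def constraint_fun_def by fastforce
next
  case False
  then have "(i,b,a) \<in> constraints k s r" using assms by (auto simp: constraints_def)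
  then have "(\<Sum>p<n i. U i p b * U i p a) = (if a = b then 1 else 0)"
    using assms(1) unfolding feasible_def constraint_fun_def by fastforce
  then show ?thesis by (simp add: mult.commute)
qed

lemma lin_l: "(\<Sum>p\<in>P. ((c::real) * x p + d * y p) * z p) = c * (\<Sum>p\<in>P. x p * z p) + d * (\<Sum>p\<in>P. y p * z p)"
  unfolding distrib_right sum.distrib by (simp add: sum_distrib_left mult.assoc)

lemma lin_r: "(\<Sum>p\<in>P. z p * ((c::real) * x p + d * y p)) = c * (\<Sum>p\<in>P. z p * x p) + d * (\<Sum>p\<in>P. z p * y p)"
  unfolding distrib_left sum.distrib by (simp add: sum_distrib_left mult.left_commute)

lemma lin_lm: "(\<Sum>p\<in>P. ((c::real) * x p - d * y p) * z p) = c * (\<Sum>p\<in>P. x p * z p) - d * (\<Sum>p\<in>P. y p * z p)"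
  unfolding left_diff_distrib sum_subtractf by (simp add: sum_distrib_left mult.assoc)

lemma lin_rm: "(\<Sum>p\<in>P. z p * ((c::real) * x p - d * y p)) = c * (\<Sum>p\<in>P. z p * x p) - d * (\<Sum>p\<in>P. z p * y p)"
  unfolding right_diff_distrib sum_subtractf by (simp add: sum_distrib_left mult.left_commute)

lemma curveA_feasible:
  assumes feas: "feasible k s n r U" and "i0 < k" "a < r"
    and wn: "(\<Sum>p<n i0. w p * w p) = 1"
    and wo: "\<And>b. b < r \<Longrightarrow> i0 < s \<or> b = a \<Longrightarrow> (\<Sum>p<n i0. w p * U i0 p b) = 0"
  shows "feasible k s n r (\<lambda>i p j. if i = i0 \<and> j = a then cos t * U i0 p a + sin t * w p else U i p j)"
  unfolding feasible_def
proof
  fix c assume c: "c \<in> constraints k s r"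
  then obtain i a1 b1 where cdef: "c = (i,a1,b1)" and ci: "i < k" "a1 \<le> b1" "b1 < r" "i < s \<or> a1 = b1"
    unfolding constraints_def by blast
  have wo': "(\<Sum>p<n i0. U i0 p b * w p) = 0" if "b < r" "i0 < s \<or> b = a" for b
    using wo[OF that] by (simp add: mult.commute)
  have ipU: "(\<Sum>p<n i. U i p x * U i p y) = (if x = y then 1 else 0)" if "x < r" "y < r" "i < s \<or> x = y" for x y
    using feas_ip[OF feas ci(1) that] .
  show "constraint_fun n c (\<lambda>i p j. if i = i0 \<and> j = a then cos t * U i0 p a + sin t * w p else U i p j) = 0"
  proof (cases "i = i0")
    case False
    then show ?thesis using ipU[of a1 b1] ci by (simp add: cdef constraint_fun_def)
  next
    case True
    have ua: "(\<Sum>p<n i0. U i0 p a * U i0 p a) = 1" using ipU[of a a] True \<open>a < r\<close> by simp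
    have wa: "(\<Sum>p<n i0. w p * U i0 p a) = 0" "(\<Sum>p<n i0. U i0 p a * w p) = 0"
      using wo[of a] wo'[of a] \<open>a < r\<close> by auto
    show ?thesis
    proof (cases "a1 = a"; cases "b1 = a")
      assume "a1 = a" "b1 = a"
      then show ?thesis using True ua wa wn
        by (simp add: cdef constraint_fun_def lin_l lin_r sin_cos_squared_add3)
    next
      assume h: "a1 = a" "b1 \<noteq> a"
      then have "i0 < s" using ci True by auto
      then show ?thesis using True h ci ipU[of a b1] wo[of b1] 
        by (simp add: cdef constraint_fun_def lin_l)
    next
      assume h: "a1 \<noteq> a" "b1 = a"
      then have "i0 < s" using ci True by auto
      then show ?thesis using True h ci ipU[of a1 a] wo'[of a1] 
        by (simp add: cdef constraint_fun_def lin_r)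
    next
      assume h: "a1 \<noteq> a" "b1 \<noteq> a"
      then show ?thesis using True ci ipU[of a1 b1]
        by (simp add: cdef constraint_fun_def)
    qed
  qed
qed


lemma curveB_feasible:
  assumes feas: "feasible k s n r U" and "i0 < k" "i0 < s" "a < r" "b < r" "a \<noteq> b"
  shows "feasible k s n r (\<lambda>i p j. if i = i0 \<and> j = a then cos t * U i0 p a + sin t * U i0 p b
      else if i = i0 \<and> j = b then cos t * U i0 p b + (- sin t) * U i0 p a else U i p j)"
  unfolding feasible_def
proof
  fix c assume c: "c \<in> constraints k s r"
  then obtain i a1 b1 where cdef: "c = (i,a1,b1)" and ci: "i < k" "a1 \<le> b1" "b1 < r" "i < s \<or> a1 = b1"
    unfolding constraints_def by blast
  have ipU: "(\<Sum>p<n i. U i p x * U i p y) = (if x = y then 1 else 0)" if "x < r" "y < r" "i < s \<or> x = y" for x y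
    using feas_ip[OF feas ci(1) that] .
  show "constraint_fun n c (\<lambda>i p j. if i = i0 \<and> j = a then cos t * U i0 p a + sin t * U i0 p b
      else if i = i0 \<and> j = b then cos t * U i0 p b + (- sin t) * U i0 p a else U i p j) = 0"
  proof (cases "i = i0")
    case False
    then show ?thesis using ipU[of a1 b1] ci by (simp add: cdef constraint_fun_def)
  next
    case True
    have ip: "(\<Sum>p<n i0. U i0 p x * U i0 p y) = (if x = y then 1 else 0)" if "x < r" "y < r" for x y
      using ipU[of x y] that True \<open>i0 < s\<close> by simp
    show ?thesis
      using True ci \<open>a < r\<close> \<open>b < r\<close> \<open>a \<noteq> b\<close>
      by (cases "a1 = a"; cases "a1 = b"; cases "b1 = a"; cases "b1 = b")
         (simp_all add: cdef constraint_fun_def lin_l lin_r lin_lm lin_rm ip sin_cos_squared_add3)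
  qed
qed

lemma FOC_A:
  assumes lm: "local_maximizer k s n r A U" and "i0 < k" "a < r"
    and wn: "(\<Sum>p<n i0. w p * w p) = 1"
    and wo: "\<And>b. b < r \<Longrightarrow> i0 < s \<or> b = a \<Longrightarrow> (\<Sum>p<n i0. w p * U i0 p b) = 0"
  shows "(\<Sum>p<n i0. partial (objective k n r A) U (i0,p,a) * w p) = 0"
proof -
  have feas: "feasible k s n r U" using lm by (simp add: local_maximizer_def)
  have "(\<Sum>j<r. \<Sum>p<n i0. partial (objective k n r A) U (i0,p,j) * (if j = a then w p else 0)) = 0"
  proof (rule lm_deriv0[OF lm \<open>i0 < k\<close>, where \<gamma>="\<lambda>t i p j. if i = i0 \<and> j = a then cos t * U i0 p a + sin t * w p else U i p j"])
    show "feasible k s n r (\<lambda>i p j. if i = i0 \<and> j = a then cos t * U i0 p a + sin t * w p else U i p j)" for t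
      by (rule curveA_feasible[OF feas \<open>i0 < k\<close> \<open>a < r\<close> wn wo])
    show "((\<lambda>t. if i0 = i0 \<and> j = a then cos t * U i0 p a + sin t * w p else U i0 p j) has_real_derivative
       (if j = a then w p else 0)) (at 0)" for p j
      by (cases "j = a") (auto intro!: derivative_eq_intros)
  qed auto
  moreover have "(\<Sum>j<r. \<Sum>p<n i0. partial (objective k n r A) U (i0,p,j) * (if j = a then w p else 0))
     = (\<Sum>j<r. if j = a then (\<Sum>p<n i0. partial (objective k n r A) U (i0,p,j) * w p) else 0)"
    by (intro sum.cong refl) auto
  ultimately show ?thesis using \<open>a < r\<close> by (simp add: sum.delta)
qed

lemma FOC_B:
  assumes lm: "local_maximizer k s n r A U" and "i0 < k" "i0 < s" "a < r" "b < r" "a \<noteq> b"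
  shows "(\<Sum>p<n i0. partial (objective k n r A) U (i0,p,a) * U i0 p b) =
         (\<Sum>p<n i0. partial (objective k n r A) U (i0,p,b) * U i0 p a)"
proof -
  have feas: "feasible k s n r U" using lm by (simp add: local_maximizer_def)
  let ?d = "\<lambda>p j. if j = a then U i0 p b else if j = b then - U i0 p a else 0"
  have "(\<Sum>j<r. \<Sum>p<n i0. partial (objective k n r A) U (i0,p,j) * ?d p j) = 0"
  proof (rule lm_deriv0[OF lm \<open>i0 < k\<close>, where \<gamma>="\<lambda>t i p j. if i = i0 \<and> j = a then cos t * U i0 p a + sin t * U i0 p b
      else if i = i0 \<and> j = b then cos t * U i0 p b + (- sin t) * U i0 p a else U i p j"])
    show "feasible k s n r (\<lambda>i p j. if i = i0 \<and> j = a then cos t * U i0 p a + sin t * U i0 p b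
      else if i = i0 \<and> j = b then cos t * U i0 p b + (- sin t) * U i0 p a else U i p j)" for t
      by (rule curveB_feasible[OF feas assms(2-6)])
    show "((\<lambda>t. if i0 = i0 \<and> j = a then cos t * U i0 p a + sin t * U i0 p b
      else if i0 = i0 \<and> j = b then cos t * U i0 p b + (- sin t) * U i0 p a else U i0 p j) has_real_derivative
       ?d p j) (at 0)" for p j
      using \<open>a \<noteq> b\<close> by (cases "j = a"; cases "j = b") (auto intro!: derivative_eq_intros)
  qed auto
  moreover have "(\<Sum>j<r. \<Sum>p<n i0. partial (objective k n r A) U (i0,p,j) * ?d p j)
     = (\<Sum>j<r. (if j = a then (\<Sum>p<n i0. partial (objective k n r A) U (i0,p,j) * U i0 p b) else 0)
        - (if j = b then (\<Sum>p<n i0. partial (objective k n r A) U (i0,p,j) * U i0 p a) else 0))"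
    using \<open>a \<noteq> b\<close> by (intro sum.cong refl) (auto simp: sum_negf)
  ultimately show ?thesis using \<open>a < r\<close> \<open>b < r\<close> by (simp add: sum.delta sum_subtractf)
qed


lemma constr_sum:
  assumes "i < k" "p < n i" "j < r"
  shows "(\<Sum>c\<in>constraints k s r. l c * partial (constraint_fun n c) U (i,p,j)) =
    (\<Sum>b<r. (if b = j then 2 * l (i,j,j) else if i < s then l (i, min j b, max j b) else 0) * U i p b)"
proof -
  let ?C = "constraints k s r"
  let ?key = "\<lambda>b. (i, min j b, max j b)"
  let ?w = "\<lambda>b. if b = j then 2 else (1::real)"
  have finC: "finite ?C"
  proof -
    have "?C \<subseteq> {..<k} \<times> {..<r} \<times> {..<r}" by (auto simp: constraints_def)
    then show ?thesis by (rule finite_subset) auto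
  qed
  have "(\<Sum>b<r. (if b = j then 2 * l (i,j,j) else if i < s then l (i, min j b, max j b) else 0) * U i p b)
     = (\<Sum>b<r. \<Sum>c\<in>?C. if c = ?key b then ?w b * l c * U i p b else 0)"
  proof (intro sum.cong refl)
    fix b assume "b \<in> {..<r}"
    then have "?key b \<in> ?C \<longleftrightarrow> (i < s \<or> b = j)"
      using assms by (auto simp: constraints_def min_def max_def)
    then show "(if b = j then 2 * l (i,j,j) else if i < s then l (i, min j b, max j b) else 0) * U i p b
       = (\<Sum>c\<in>?C. if c = ?key b then ?w b * l c * U i p b else 0)"
      using finC by (auto simp: sum.delta')
  qed
  also have "\<dots> = (\<Sum>c\<in>?C. \<Sum>b<r. if c = ?key b then ?w b * l c * U i p b else 0)"
    by (rule sum.swap)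
  also have "\<dots> = (\<Sum>c\<in>?C. l c * partial (constraint_fun n c) U (i,p,j))"
  proof (intro sum.cong refl)
    fix c assume "c \<in> ?C"
    then obtain i' a' b' where cdef: "c = (i',a',b')" and ci: "i' < k" "a' \<le> b'" "b' < r"
      unfolding constraints_def by blast
    have D: "partial (constraint_fun n c) U (i,p,j) =
      (if i = i' then (if j = a' then U i' p b' else 0) + (if j = b' then U i' p a' else 0) else 0)"
      unfolding cdef using assms(2) by (rule partial_constraint)
    show "(\<Sum>b<r. if c = ?key b then ?w b * l c * U i p b else 0) = l c * partial (constraint_fun n c) U (i,p,j)"
    proof (cases "i' = i")
      case False
      then show ?thesis unfolding D by (simp add: cdef)
    next
      case True
      consider (jj) "a' = j" "b' = j" | (jb) "a' = j" "b' \<noteq> j" | (aj) "a' \<noteq> j" "b' = j" | (no) "a' \<noteq> j" "b' \<noteq> j"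
        by blast
      then show ?thesis
      proof cases
        case jj
        then have "\<And>b. (c = ?key b) = (b = j)" using True cdef by (auto simp: min_def max_def)
        then show ?thesis using jj True \<open>j < r\<close> by (simp add: D sum.delta)
      next
        case jb
        then have "\<And>b. (c = ?key b) = (b = b')" using True cdef ci by (auto simp: min_def max_def)
        then show ?thesis using jb True ci by (simp add: D sum.delta)
      next
        case aj
        then have "\<And>b. (c = ?key b) = (b = a')" using True cdef ci by (auto simp: min_def max_def)
        then show ?thesis using aj True ci by (simp add: D sum.delta)
      next
        case no
        then have "\<And>b. (c = ?key b) = False" using True cdef ci by (auto simp: min_def max_def)
        then show ?thesis using no True by (simp add: D)
      qed
    qed
  qed
  finally show ?thesis by simp
qed


lemma N_extract:
  assumes feas: "feasible k s n r U" and "i < k" "j < r" "b0 < r" "i < s \<or> b0 = j"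
    and H: "\<And>p. p < n i \<Longrightarrow> (\<Sum>b<r. (if b = j then 2 * l (i,j,j) else if i < s then l (i, min j b, max j b) else 0) * U i p b) = 0"
  shows "(if b0 = j then 2 * l (i,j,j) else if i < s then l (i, min j b0, max j b0) else 0) = 0"
proof -
  let ?N = "\<lambda>b. (if b = j then 2 * l (i,j,j) else if i < s then l (i, min j b, max j b) else 0)"
  have "0 = (\<Sum>p<n i. (\<Sum>b<r. ?N b * U i p b) * U i p b0)"
    using H by simp
  also have "\<dots> = (\<Sum>b<r. ?N b * (\<Sum>p<n i. U i p b * U i p b0))"
    by (simp add: sum_distrib_right sum_distrib_left mult.assoc sum.swap[of _ "{..<n i}"])
  also have "\<dots> = (\<Sum>b<r. if b = b0 then ?N b else 0)"
  proof (intro sum.cong refl)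
    fix b assume b: "b \<in> {..<r}"
    show "?N b * (\<Sum>p<n i. U i p b * U i p b0) = (if b = b0 then ?N b else 0)"
    proof (cases "i < s")
      case True
      then show ?thesis using feas_ip[OF feas \<open>i < k\<close>, of b b0] b \<open>b0 < r\<close> by simp
    next
      case False
      then have "b0 = j" using assms by simp
      then show ?thesis using feas_ip[OF feas \<open>i < k\<close>, of b b0] b \<open>b0 < r\<close> False by auto
    qed
  qed
  also have "\<dots> = ?N b0" using \<open>b0 < r\<close> by (simp add: sum.delta)
  finally show ?thesis by simp
qed

lemma licq:
  assumes feas: "feasible k s n r U"
  shows "LICQ k s n r U"
  unfolding LICQ_def
proof (intro allI impI ballI)
  fix \<mu> c
  assume H: "\<forall>x\<in>coords k n r. (\<Sum>c\<in>constraints k s r. \<mu> c * partial (constraint_fun n c) U x) = 0"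
    and c: "c \<in> constraints k s r"
  then obtain i a b where cdef: "c = (i,a,b)" and ci: "i < k" "a \<le> b" "b < r" "i < s \<or> a = b"
    unfolding constraints_def by blast
  have H': "(\<Sum>b<r. (if b = a then 2 * \<mu> (i,a,a) else if i < s then \<mu> (i, min a b, max a b) else 0) * U i p b) = 0"
    if "p < n i" for p
    using H[rule_format, of "(i,p,a)"] constr_sum[where i=i and k=k and p=p and n=n and j=a and r=r and s=s and l=\<mu> and U=U] that ci
    by (auto simp: coords_def)
  have "(if b = a then 2 * \<mu> (i,a,a) else if i < s then \<mu> (i, min a b, max a b) else 0) = 0"
    by (rule N_extract[OF feas ci(1) _ ci(3)]) (use ci H' in auto)
  then show "\<mu> c = 0" using ci by (auto simp: cdef split: if_splits)
qed


lemma grad_repr: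
  assumes lm: "local_maximizer k s n r A U" and "i < k" "j < r" "p0 < n i"
  shows "partial (objective k n r A) U (i,p0,j) =
    (\<Sum>b<r. (if i < s \<or> b = j then (\<Sum>q<n i. U i q b * partial (objective k n r A) U (i,q,j)) else 0) * U i p0 b)"
proof -
  have feas: "feasible k s n r U" using lm by (simp add: local_maximizer_def)
  define G where "G p = partial (objective k n r A) U (i,p,j)" for p
  define c where "c b = (if i < s \<or> b = j then (\<Sum>q<n i. U i q b * G q) else 0)" for b
  define v where "v p = G p - (\<Sum>b<r. c b * U i p b)" for p
  have ipc: "(\<Sum>b<r. c b * (\<Sum>p<n i. U i p b * U i p b0)) = c b0" if "b0 < r" "i < s \<or> b0 = j" for b0
  proof -
    have "(\<Sum>b<r. c b * (\<Sum>p<n i. U i p b * U i p b0)) = (\<Sum>b<r. if b = b0 then c b else 0)"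
    proof (intro sum.cong refl)
      fix b assume b: "b \<in> {..<r}"
      show "c b * (\<Sum>p<n i. U i p b * U i p b0) = (if b = b0 then c b else 0)"
      proof (cases "i < s")
        case True
        then show ?thesis using feas_ip[OF feas \<open>i < k\<close>, of b b0] b that by simp
      next
        case False
        then have "b0 = j" using that by simp
        then show ?thesis using feas_ip[OF feas \<open>i < k\<close>, of b b0] b that False by (auto simp: c_def)
      qed
    qed
    also have "\<dots> = c b0" using that by (simp add: sum.delta)
    finally show ?thesis .
  qed
  have vo: "(\<Sum>p<n i. v p * U i p b0) = 0" if "b0 < r" "i < s \<or> b0 = j" for b0
  proof -
    have "(\<Sum>p<n i. v p * U i p b0) = (\<Sum>p<n i. G p * U i p b0) - (\<Sum>b<r. c b * (\<Sum>p<n i. U i p b * U i p b0))"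
      unfolding v_def left_diff_distrib sum_subtractf
      by (simp add: sum_distrib_right sum_distrib_left mult.assoc sum.swap[of _ "{..<n i}"])
    also have "\<dots> = 0" using ipc[OF that] that by (simp add: c_def mult.commute)
    finally show ?thesis .
  qed
  have vv: "(\<Sum>p<n i. v p * v p) = (\<Sum>p<n i. G p * v p)"
  proof -
    have e1: "v p * v p = G p * v p - v p * (\<Sum>b<r. c b * U i p b)" for p
      unfolding v_def by (simp add: algebra_simps)
    have e2: "(\<Sum>p<n i. v p * (\<Sum>b<r. c b * U i p b)) = (\<Sum>b<r. c b * (\<Sum>p<n i. v p * U i p b))"
      unfolding sum_distrib_left by (subst sum.swap) (simp add: mult_ac)
    have "(\<Sum>p<n i. v p * v p) = (\<Sum>p<n i. G p * v p) - (\<Sum>b<r. c b * (\<Sum>p<n i. v p * U i p b))"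
      unfolding e1 sum_subtractf e2 ..
    also have "(\<Sum>b<r. c b * (\<Sum>p<n i. v p * U i p b)) = 0"
      by (intro sum.neutral ballI) (auto simp: c_def vo)
    finally show ?thesis by simp
  qed
  define S where "S = (\<Sum>p<n i. v p * v p)"
  have S0: "S \<ge> 0" unfolding S_def by (intro sum_nonneg) auto
  have "S = 0"
  proof (rule ccontr)
    assume "S \<noteq> 0"
    then have Sp: "S > 0" using S0 by simp
    define w where "w p = v p / sqrt S" for p
    have wn: "(\<Sum>p<n i. w p * w p) = 1"
      using Sp by (simp add: w_def sum_divide_distrib[symmetric] S_def[symmetric])
    have wo: "(\<Sum>p<n i. w p * U i p b) = 0" if "b < r" "i < s \<or> b = j" for b
      using vo[OF that] by (simp add: w_def sum_divide_distrib[symmetric])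
    have "(\<Sum>p<n i. G p * w p) = 0"
      unfolding G_def by (rule FOC_A[OF lm \<open>i < k\<close> \<open>j < r\<close> wn wo])
    then have "(\<Sum>p<n i. G p * v p) = 0"
      using Sp by (simp add: w_def sum_divide_distrib[symmetric])
    then show False using vv \<open>S \<noteq> 0\<close> by (simp add: S_def)
  qed
  then have "\<forall>p\<in>{..<n i}. v p * v p = 0"
    unfolding S_def by (subst sum_nonneg_eq_0_iff[symmetric]) auto
  then have "v p0 = 0" using \<open>p0 < n i\<close> by simp
  then show ?thesis unfolding v_def c_def G_def by simp
qed


lemma multiplier_exists:
  assumes lm: "local_maximizer k s n r A U"
  shows "\<exists>l. l \<in> lagrange_multipliers k s n r A U"
proof -
  define M where "M i a b = (\<Sum>q<n i. U i q a * partial (objective k n r A) U (i,q,b))" for i a b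
  have sym: "M i a b = M i b a" if "i < k" "i < s" "a < r" "b < r" for i a b
  proof (cases "a = b")
    case False
    then show ?thesis using FOC_B[OF lm that(1,2) that(4,3)] False by (simp add: M_def mult.commute)
  qed simp
  define l where "l c = (if c \<in> constraints k s r then (case c of (i,a,b) \<Rightarrow> if a = b then M i a a / 2 else M i a b) else undefined)" for c
  have "l \<in> lagrange_multipliers k s n r A U"
    unfolding lagrange_multipliers_def
  proof (intro CollectI conjI ballI)
    show "l \<in> constraints k s r \<rightarrow>\<^sub>E UNIV" by (auto simp: l_def PiE_def extensional_def)
  next
    fix x assume x: "x \<in> coords k n r"
    then obtain i p j where xdef: "x = (i,p,j)" and xi: "i < k" "p < n i" "j < r"
      unfolding coords_def by blast
    have "(\<Sum>c\<in>constraints k s r. l c * partial (constraint_fun n c) U x) =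
      (\<Sum>b<r. (if b = j then 2 * l (i,j,j) else if i < s then l (i, min j b, max j b) else 0) * U i p b)"
      unfolding xdef by (rule constr_sum) (rule xi)+
    also have "\<dots> = (\<Sum>b<r. (if i < s \<or> b = j then M i b j else 0) * U i p b)"
    proof (intro sum.cong refl)
      fix b assume b: "b \<in> {..<r}"
      have "(if b = j then 2 * l (i,j,j) else if i < s then l (i, min j b, max j b) else 0) = 
         (if i < s \<or> b = j then M i b j else 0)"
      proof (cases "b = j")
        case True
        then show ?thesis using xi by (simp add: l_def constraints_def)
      next
        case False
        show ?thesis
        proof (cases "i < s")
          case True
          then have "(i, min j b, max j b) \<in> constraints k s r" using xi b by (auto simp: constraints_def)
          then show ?thesis using True False sym[OF xi(1) True, of j b] xi b
            by (auto simp: l_def min_def max_def)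
        qed (use False in simp)
      qed
      then show "(if b = j then 2 * l (i,j,j) else if i < s then l (i, min j b, max j b) else 0) * U i p b
         = (if i < s \<or> b = j then M i b j else 0) * U i p b" by simp
    qed
    also have "\<dots> = partial (objective k n r A) U x"
      unfolding xdef M_def by (rule grad_repr[OF lm xi(1,3,2), symmetric])
    finally show "partial (objective k n r A) U x = (\<Sum>c\<in>constraints k s r. l c * partial (constraint_fun n c) U x)" ..
  qed
  then show ?thesis by blast
qed

lemma multiplier_unique:
  assumes feas: "feasible k s n r U"
    and l1: "l1 \<in> lagrange_multipliers k s n r A U" and l2: "l2 \<in> lagrange_multipliers k s n r A U"
  shows "l1 = l2"
proof -
  have H: "\<forall>x\<in>coords k n r. (\<Sum>c\<in>constraints k s r. (l1 c - l2 c) * partial (constraint_fun n c) U x) = 0"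
  proof
    fix x assume x: "x \<in> coords k n r"
    have "(\<Sum>c\<in>constraints k s r. (l1 c - l2 c) * partial (constraint_fun n c) U x) =
      (\<Sum>c\<in>constraints k s r. l1 c * partial (constraint_fun n c) U x) - 
      (\<Sum>c\<in>constraints k s r. l2 c * partial (constraint_fun n c) U x)"
      by (simp add: left_diff_distrib sum_subtractf)
    also have "\<dots> = 0" using l1 l2 x by (simp add: lagrange_multipliers_def)
    finally show "(\<Sum>c\<in>constraints k s r. (l1 c - l2 c) * partial (constraint_fun n c) U x) = 0" .
  qed
  have "\<forall>c\<in>constraints k s r. l1 c - l2 c = 0"
    using licq[OF feas, unfolded LICQ_def, THEN spec[of _ "\<lambda>c. l1 c - l2 c"]] H by simp
  then show ?thesis using l1 l2 unfolding lagrange_multipliers_def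
    by (intro PiE_ext[of l1 "constraints k s r" "\<lambda>_. UNIV" l2]) auto
qed

theorem proposition4p2:
  fixes k s r :: nat and n :: "nat \<Rightarrow> nat" and A :: "(nat \<Rightarrow> nat) \<Rightarrow> real"
  assumes "1 \<le> s" and "s \<le> k" and "\<forall>i<s. r \<le> n i"
  shows "(\<forall>U. feasible k s n r U \<longrightarrow> LICQ k s n r U) \<and>
         (\<forall>U. local_maximizer k s n r A U \<longrightarrow>
              (\<exists>l. lagrange_multipliers k s n r A U = {l}))"
proof (intro conjI allI impI)
  fix U assume "feasible k s n r U"
  then show "LICQ k s n r U" by (rule licq)
next
  fix U assume lm: "local_maximizer k s n r A U"
  then have feas: "feasible k s n r U" by (simp add: local_maximizer_def)
  obtain l where l: "l \<in> lagrange_multipliers k s n r A U" using multiplier_exists[OF lm] by blast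
  have "lagrange_multipliers k s n r A U = {l}"
    using l multiplier_unique[OF feas _ l] by blast
  then show "\<exists>l. lagrange_multipliers k s n r A U = {l}" by blast
qed

end
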